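(* Let $d\ge 2$ and $t>0$, and let $k_{\mathrm{PF}}(x,z) := \exp\left(-t\arccos(\langle x,z\rangle)\right)$ for $x,z\in\mathbb{S}^{+}_{d-1} := \{x\in\mathbb{R}^d_{+}:\|x\|_2=1\}$. Then all coefficients $a_i$ of the Legendre polynomial expansion $k_{\mathrm{PF}}(x,z)=\sum_{i=0}^\infty a_iP_i^d(\langle x,z\rangle)$ are nonnegative.
   Context: $P_i^d$ denotes the associated Legendre polynomial of degree $i$ in dimension $d$. *)

theory Defs
  imports "HOL-Analysis.Analysis"
begin

text \<open>Legendre (Gegenbauer) polynomial P_n^d of degree n in dimension d, normalised by
  P_n^d(1) = 1, via the standard three-term recurrence
  P_{n+1}(s) = ((2n+d-2) s P_n(s) - n P_{n-1}(s)) / (n+d-2).\<close>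
fun legendre :: "nat \<Rightarrow> nat \<Rightarrow> real \<Rightarrow> real" where
  "legendre d 0 s = 1"
| "legendre d (Suc 0) s = s"
| "legendre d (Suc (Suc n)) s =
     ((2 * real n + real d) * s * legendre d (Suc n) s - (real n + 1) * legendre d n s)
       / (real n + real d - 1)"

definition legendre_weight :: "nat \<Rightarrow> real \<Rightarrow> real" where
  "legendre_weight d s = (1 - s\<^sup>2) powr ((real d - 3) / 2)"

text \<open>The i-th coefficient a_i of the Legendre expansion f(s) = sum_i a_i P_i^d(s) on [-1,1]
  (orthogonal projection coefficient).\<close>
definition legendre_coeff :: "nat \<Rightarrow> (real \<Rightarrow> real) \<Rightarrow> nat \<Rightarrow> real" where
  "legendre_coeff d f i =
     integral {-1..1} (\<lambda>s. f s * legendre d i s * legendre_weight d s)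
     / integral {-1..1} (\<lambda>s. (legendre d i s)\<^sup>2 * legendre_weight d s)"

end

theory Submission
  imports Defs
begin

lemma w_meas: "(\<lambda>s. legendre_weight d s) \<in> borel_measurable (lebesgue_on S)"
  unfolding legendre_weight_def
  by measurable (auto simp: id_def[symmetric])

lemma v_int: "((\<lambda>s. (1 - s\<^sup>2) powr (-1/2)) has_integral pi) {-1..1}"
proof -
  have "((\<lambda>s. (1 - s\<^sup>2) powr (-1/2)) has_integral (arcsin 1 - arcsin (-1))) {-1..1}"
  proof (rule fundamental_theorem_of_calculus_interior)
    show "continuous_on {-1..1::real} arcsin" by (rule continuous_on_arcsin')
    fix x :: real assume x: "x \<in> {-1<..<1}"
    then have "(arcsin has_real_derivative inverse (sqrt (1 - x\<^sup>2))) (at x)"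
      by (intro DERIV_arcsin) auto
    moreover have "0 \<le> 1 - x\<^sup>2" using x by (simp add: abs_square_le_1 abs_le_iff)
    then have "inverse (sqrt (1 - x\<^sup>2)) = (1 - x\<^sup>2) powr (-1/2)"
      by (simp add: powr_minus powr_half_sqrt)
    ultimately show "(arcsin has_vector_derivative (1 - x\<^sup>2) powr (-1/2)) (at x)"
      by (simp add: has_real_derivative_iff_has_vector_derivative)
  qed simp
  then show ?thesis by simp
qed

lemma w_nonneg: "0 \<le> legendre_weight d s"
  by (simp add: legendre_weight_def)

lemma w_le:
  assumes "d \<ge> 2" "-1 \<le> s" "s \<le> 1"
  shows "legendre_weight d s \<le> (1 - s\<^sup>2) powr (-1/2)"
proof -
  have "0 \<le> 1 - s\<^sup>2" "1 - s\<^sup>2 \<le> 1" using assms by (auto simp: abs_square_le_1 abs_le_iff)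
  moreover have "-1/2 \<le> (real d - 3) / 2" using assms by auto
  ultimately show ?thesis unfolding legendre_weight_def by (rule powr_mono'[rotated])
qed

lemma w_absint:
  assumes "d \<ge> 2"
  shows "legendre_weight d absolutely_integrable_on {-1..1}"
proof (rule measurable_bounded_by_integrable_imp_absolutely_integrable)
  show "legendre_weight d \<in> borel_measurable (lebesgue_on {-1..1})"
    using w_meas[of d] by simp
  show "(\<lambda>s. (1 - s\<^sup>2) powr (-1/2)) integrable_on {-1..1::real}"
    using v_int by blast
  fix x :: real assume "x \<in> {-1..1}"
  then show "norm (legendre_weight d x) \<le> (1 - x\<^sup>2) powr (-1/2)"
    using w_le[OF assms] w_nonneg[of d x] by auto
qed auto

lemma cont_w_absint:
  assumes "d \<ge> 2" "continuous_on {-1..1} g"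
  shows "(\<lambda>s. g s * legendre_weight d s) absolutely_integrable_on {-1..1}"
proof (rule absolutely_integrable_bounded_measurable_product_real)
  show "g \<in> borel_measurable (lebesgue_on {-1..1})"
    by (rule continuous_imp_measurable_on_sets_lebesgue[OF assms(2)]) auto
  show "bounded (g ` {-1..1})"
    by (intro compact_imp_bounded compact_continuous_image assms(2)) auto
qed (use w_absint[OF assms(1)] in auto)

lemma cont_w_int:
  assumes "d \<ge> 2" "continuous_on {-1..1} g"
  shows "(\<lambda>s. g s * legendre_weight d s) integrable_on {-1..1}"
  using cont_w_absint[OF assms] absolutely_integrable_on_def by blast

definition IW :: "nat \<Rightarrow> (real \<Rightarrow> real) \<Rightarrow> real" where
  "IW d g = integral {-1..1} (\<lambda>s. g s * legendre_weight d s)"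

lemma IW_add:
  assumes "d \<ge> 2" "continuous_on {-1..1} g" "continuous_on {-1..1} h"
  shows "IW d (\<lambda>s. g s + h s) = IW d g + IW d h"
  unfolding IW_def distrib_right
  by (rule integral_add; rule cont_w_int; fact)

lemma IW_cmul: "IW d (\<lambda>s. c * g s) = c * IW d g"
  unfolding IW_def by (simp add: mult.assoc)

lemma IW_cong: "(\<And>s. -1 \<le> s \<Longrightarrow> s \<le> 1 \<Longrightarrow> g s = h s) \<Longrightarrow> IW d g = IW d h"
  unfolding IW_def by (intro integral_cong) auto

lemma leg_cont: "continuous_on S (legendre d n) \<and> continuous_on S (legendre d (Suc n))"
proof (induction n)
  case 0
  then show ?case by (auto intro!: continuous_intros)
next
  case (Suc n)
  then have "continuous_on S (\<lambda>s. ((2 * real n + real d) * s * legendre d (Suc n) s - (real n + 1) * legendre d n s)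
       * inverse (real n + real d - 1))"
    by (auto intro!: continuous_intros)
  then show ?case using Suc by (simp add: divide_inverse)
qed

lemma leg_cont': "continuous_on S (legendre d n)"
  using leg_cont by blast

lemma leg_cont'': "continuous_on S (\<lambda>s. legendre d n s)"
  using leg_cont by (simp add: leg_cont')

lemma leg_rec:
  assumes "d \<ge> 2"
  shows "(real n + real d - 1) * legendre d (Suc (Suc n)) s =
    (2 * real n + real d) * s * legendre d (Suc n) s - (real n + 1) * legendre d n s"
proof -
  have "real n + real d - 1 \<noteq> 0" using assms by linarith
  then show ?thesis by simp
qed

lemma leg_rec':
  assumes "d \<ge> 2"
  shows "(real n + real d - 2) * legendre d (Suc n) s =
    (2 * real n + real d - 2) * s * legendre d n s - real n * legendre d (n - 1) s"
proof (cases n)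
  case 0
  then show ?thesis by (simp add: algebra_simps)
next
  case (Suc m)
  then show ?thesis using leg_rec[OF assms, of m s] by (simp add: algebra_simps)
qed

fun dleg :: "nat \<Rightarrow> nat \<Rightarrow> real \<Rightarrow> real" where
  "dleg d 0 s = 0"
| "dleg d (Suc 0) s = 1"
| "dleg d (Suc (Suc n)) s =
     ((2 * real n + real d) * (legendre d (Suc n) s + s * dleg d (Suc n) s) - (real n + 1) * dleg d n s)
       / (real n + real d - 1)"

lemma leg_deriv_pair:
  assumes "d \<ge> 2"
  shows "(\<forall>s. (legendre d n has_real_derivative dleg d n s) (at s)) \<and>
   (\<forall>s. (legendre d (Suc n) has_real_derivative dleg d (Suc n) s) (at s))"
proof (induction n)
  case 0
  have "((\<lambda>s. s) has_real_derivative 1) (at s)" for s :: real by (rule DERIV_ident)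
  moreover have "legendre d 0 = (\<lambda>s. 1)" "legendre d (Suc 0) = (\<lambda>s. s)" by (auto intro: ext)
  ultimately show ?case by (auto intro: DERIV_const)
next
  case (Suc n)
  then have h1: "\<And>s. (legendre d n has_real_derivative dleg d n s) (at s)"
    and h2: "\<And>s. (legendre d (Suc n) has_real_derivative dleg d (Suc n) s) (at s)" by auto
  have c: "real n + real d - 1 \<noteq> 0" using assms by linarith
  have "((\<lambda>s. inverse (real n + real d - 1) * ((2 * real n + real d) * (s * legendre d (Suc n) s) - (real n + 1) * legendre d n s))
     has_real_derivative inverse (real n + real d - 1) * ((2 * real n + real d) * (s * dleg d (Suc n) s + 1 * legendre d (Suc n) s) - (real n + 1) * dleg d n s)) (at s)" for s
    by (intro DERIV_cmult DERIV_diff DERIV_mult' DERIV_ident h1 h2)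
  moreover have "legendre d (Suc (Suc n)) = (\<lambda>s. inverse (real n + real d - 1) * ((2 * real n + real d) * (s * legendre d (Suc n) s) - (real n + 1) * legendre d n s))"
    by (rule ext) (simp add: divide_inverse mult.commute mult.assoc)
  moreover have "dleg d (Suc (Suc n)) s = inverse (real n + real d - 1) * ((2 * real n + real d) * (s * dleg d (Suc n) s + 1 * legendre d (Suc n) s) - (real n + 1) * dleg d n s)" for s
    by (simp add: divide_inverse mult.commute add.commute)
  ultimately show ?case using h2 by simp
qed

lemma leg_deriv: "d \<ge> 2 \<Longrightarrow> (legendre d n has_real_derivative dleg d n s) (at s)"
  using leg_deriv_pair by blast

lemma dleg_id_pair:
  assumes "d \<ge> 2"
  shows "(1 - s\<^sup>2) * dleg d n s = real n * (legendre d (n - 1) s - s * legendre d n s) \<and>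
         (1 - s\<^sup>2) * dleg d (Suc n) s = real (Suc n) * (legendre d n s - s * legendre d (Suc n) s)"
proof (induction n)
  case 0
  then show ?case by (simp add: power2_eq_square)
next
  case (Suc n)
  define A where "A = legendre d (n - 1) s"
  define B where "B = legendre d n s"
  define C where "C = legendre d (Suc n) s"
  define D1 where "D1 = dleg d n s"
  define E where "E = dleg d (Suc n) s"
  define c where "c = real n + real d - 1"
  have c: "c \<noteq> 0" using assms unfolding c_def by linarith
  have H1: "(1 - s\<^sup>2) * D1 = real n * (A - s * B)" using Suc unfolding A_def B_def D1_def by simp
  have H2: "(1 - s\<^sup>2) * E = (real n + 1) * (B - s * C)" using Suc unfolding B_def C_def E_def by simp
  have R: "real n * A = (2 * real n + real d - 2) * s * B - (real n + real d - 2) * C"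
    using leg_rec'[OF assms, of n s] unfolding A_def B_def C_def by simp
  have P2: "legendre d (Suc (Suc n)) s = ((2 * real n + real d) * s * C - (real n + 1) * B) / c"
    unfolding C_def B_def c_def by simp
  have D2: "dleg d (Suc (Suc n)) s = ((2 * real n + real d) * (C + s * E) - (real n + 1) * D1) / c"
    unfolding C_def E_def D1_def c_def by simp
  have "c * ((1 - s\<^sup>2) * dleg d (Suc (Suc n)) s) =
      (2 * real n + real d) * (1 - s\<^sup>2) * C + (2 * real n + real d) * s * ((1 - s\<^sup>2) * E)
       - (real n + 1) * ((1 - s\<^sup>2) * D1)"
    using c unfolding D2 by (simp add: field_simps)
  also have "\<dots> = (2 * real n + real d) * (1 - s\<^sup>2) * C + (2 * real n + real d) * s * ((real n + 1) * (B - s * C))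
       - (real n + 1) * (real n * A - real n * s * B)"
    unfolding H1 H2 by (simp add: algebra_simps)
  also have "\<dots> = (2 * real n + real d) * (1 - s\<^sup>2) * C + (2 * real n + real d) * s * ((real n + 1) * (B - s * C))
       - (real n + 1) * ((2 * real n + real d - 2) * s * B - (real n + real d - 2) * C - real n * s * B)"
    unfolding R ..
  also have "\<dots> = c * (real (Suc (Suc n)) * (C - s * (((2 * real n + real d) * s * C - (real n + 1) * B) / c)))"
    using c unfolding c_def by (simp add: field_simps power2_eq_square)
  finally have eq: "c * ((1 - s\<^sup>2) * dleg d (Suc (Suc n)) s) = c * (real (Suc (Suc n)) * (C - s * legendre d (Suc (Suc n)) s))"
    by (simp only: P2)
  then have "(1 - s\<^sup>2) * dleg d (Suc (Suc n)) s = real (Suc (Suc n)) * (C - s * legendre d (Suc (Suc n)) s)"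
    by (rule mult_left_cancel[THEN iffD1, OF c])
  then show ?case using Suc unfolding C_def by simp
qed

lemma dleg_id: "d \<ge> 2 \<Longrightarrow> (1 - s\<^sup>2) * dleg d n s = real n * (legendre d (n - 1) s - s * legendre d n s)"
  using dleg_id_pair by blast

lemma F_deriv:
  assumes d: "d \<ge> 2" and s: "-1 < s" "s < 1"
  shows "((\<lambda>s. (1 - s\<^sup>2) powr ((real d - 1) / 2) * legendre d m s) has_real_derivative
     legendre_weight d s * (real m * legendre d (m - 1) s - (real m + real d - 1) * s * legendre d m s)) (at s)"
proof -
  have u: "0 < 1 - s\<^sup>2" using s by (simp add: abs_square_less_1 abs_less_iff)
  have "((\<lambda>s. 1 - s\<^sup>2) has_real_derivative (- (2 * s))) (at s)"
    by (auto intro!: derivative_eq_intros)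
  then have "((\<lambda>s. (1 - s\<^sup>2) powr ((real d - 1) / 2)) has_real_derivative
      ((real d - 1) / 2) * (1 - s\<^sup>2) powr ((real d - 1) / 2 - 1) * (- (2 * s))) (at s)"
    using u by (auto intro!: derivative_eq_intros)
  then have "((\<lambda>s. (1 - s\<^sup>2) powr ((real d - 1) / 2) * legendre d m s) has_real_derivative
     (1 - s\<^sup>2) powr ((real d - 1) / 2) * dleg d m s + ((real d - 1) / 2) * (1 - s\<^sup>2) powr ((real d - 1) / 2 - 1) * (- (2 * s)) * legendre d m s) (at s)"
    by (intro DERIV_mult' leg_deriv d)
  moreover have e1: "(1 - s\<^sup>2) powr ((real d - 1) / 2 - 1) = legendre_weight d s"
    unfolding legendre_weight_def by (simp add: diff_divide_distrib)
  moreover have e2: "(1 - s\<^sup>2) powr ((real d - 1) / 2) = legendre_weight d s * (1 - s\<^sup>2)"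
  proof -
    have "(1 - s\<^sup>2) powr ((real d - 1) / 2) = (1 - s\<^sup>2) powr ((real d - 1) / 2 - 1 + 1)" by simp
    also have "\<dots> = (1 - s\<^sup>2) powr ((real d - 1) / 2 - 1) * (1 - s\<^sup>2)"
      using u powr_add[of "1 - s\<^sup>2" "(real d - 1) / 2 - 1" 1] by (simp del: powr_add)
    finally show ?thesis using e1 by simp
  qed
  moreover have "legendre_weight d s * (1 - s\<^sup>2) * dleg d m s + ((real d - 1) / 2) * legendre_weight d s * (- (2 * s)) * legendre d m s
      = legendre_weight d s * (real m * legendre d (m - 1) s - (real m + real d - 1) * s * legendre d m s)"
  proof -
    have "legendre_weight d s * (1 - s\<^sup>2) * dleg d m s = legendre_weight d s * (real m * (legendre d (m - 1) s - s * legendre d m s))"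
      using dleg_id[OF d, of s m] by simp
    then show ?thesis by (simp add: field_simps)
  qed
  ultimately show ?thesis by simp
qed

lemma sq_le1: "-1 \<le> x \<Longrightarrow> x \<le> 1 \<Longrightarrow> 0 \<le> 1 - (x::real)\<^sup>2"
  by (simp add: abs_square_le_1 abs_le_iff)

lemma F_cont:
  assumes d: "d \<ge> 2"
  shows "continuous_on {-1..1} (\<lambda>s. (1 - s\<^sup>2) powr ((real d - 1) / 2) * legendre d m s)"
proof -
  have "continuous_on {-1..1} (\<lambda>s::real. (1 - s\<^sup>2) powr ((real d - 1) / 2))"
  proof (rule continuous_on_powr')
    show "\<forall>x\<in>{-1..1::real}. 0 \<le> 1 - x\<^sup>2 \<and> (1 - x\<^sup>2 = 0 \<longrightarrow> 0 < (real d - 1) / 2)"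
      using d by (auto simp: abs_square_le_1 abs_le_iff)
  qed (auto intro!: continuous_intros)
  then show ?thesis by (intro continuous_on_mult leg_cont'')
qed

lemma IW_D_zero:
  assumes d: "d \<ge> 2"
  shows "IW d (\<lambda>s. real m * legendre d (m - 1) s - (real m + real d - 1) * s * legendre d m s) = 0"
proof -
  let ?F = "\<lambda>s. (1 - s\<^sup>2) powr ((real d - 1) / 2) * legendre d m s"
  have "((\<lambda>s. legendre_weight d s * (real m * legendre d (m - 1) s - (real m + real d - 1) * s * legendre d m s))
      has_integral (?F 1 - ?F (-1))) {-1..1}"
  proof (rule fundamental_theorem_of_calculus_interior)
    show "continuous_on {-1..1} ?F" by (rule F_cont[OF d])
    fix x :: real assume "x \<in> {-1<..<1}"
    then show "(?F has_vector_derivative legendre_weight d x * (real m * legendre d (m - 1) x - (real m + real d - 1) * x * legendre d m x)) (at x)"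
      using F_deriv[OF d, of x m] by (simp add: has_real_derivative_iff_has_vector_derivative)
  qed simp
  then show ?thesis unfolding IW_def by (simp add: mult.commute integral_unique)
qed

lemma IW_lin:
  assumes "d \<ge> 2" "continuous_on {-1..1} g" "continuous_on {-1..1} h"
  shows "IW d (\<lambda>s. a * g s + b * h s) = a * IW d g + b * IW d h"
proof -
  have "IW d (\<lambda>s. a * g s + b * h s) = IW d (\<lambda>s. a * g s) + IW d (\<lambda>s. b * h s)"
    by (rule IW_add) (use assms in \<open>auto intro!: continuous_intros\<close>)
  then show ?thesis by (simp add: IW_cmul)
qed

lemma IW_lin':
  assumes "d \<ge> 2" "continuous_on {-1..1} g" "continuous_on {-1..1} h"
  shows "IW d (\<lambda>s. a * g s - b * h s) = a * IW d g - b * IW d h"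
  using IW_lin[OF assms, of a "-b"] by simp

lemma IW_nonneg:
  assumes "d \<ge> 2" "continuous_on {-1..1} g" "\<And>s. -1 \<le> s \<Longrightarrow> s \<le> 1 \<Longrightarrow> 0 \<le> g s"
  shows "0 \<le> IW d g"
  unfolding IW_def
  by (rule integral_nonneg[OF cont_w_int[OF assms(1,2)]]) (use assms(3) w_nonneg in auto)

lemma IW_D:
  assumes d: "d \<ge> 2"
  shows "real m * IW d (legendre d (m - 1)) = (real m + real d - 1) * IW d (\<lambda>s. s * legendre d m s)"
proof -
  have "0 = IW d (\<lambda>s. real m * legendre d (m - 1) s - (real m + real d - 1) * s * legendre d m s)"
    using IW_D_zero[OF d] by simp
  also have "\<dots> = IW d (\<lambda>s. real m * legendre d (m - 1) s - (real m + real d - 1) * (s * legendre d m s))"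
    by (simp add: mult.assoc)
  also have "\<dots> = real m * IW d (legendre d (m - 1)) - (real m + real d - 1) * IW d (\<lambda>s. s * legendre d m s)"
    by (rule IW_lin') (use d in \<open>auto intro!: continuous_intros leg_cont''\<close>)
  finally show ?thesis by simp
qed

lemma alg1: "(n::real) + d > 0 \<Longrightarrow> (2 * n + d) * ((n + 1) * x / (n + d)) - (n + 1) * x = (n + 1) * x * n / (n + d)"
  by (simp add: field_simps)

lemma alg2: "(z::real) * ((a * p + b * q) / c) = (a / c) * (z * p) + (b / c) * (z * q)"
  by (simp add: field_simps add_divide_distrib)

lemma I_nonneg_pair:
  assumes d: "d \<ge> 2"
  shows "0 \<le> IW d (legendre d n) \<and> 0 \<le> IW d (legendre d (Suc n))"
proof (induction n)
  case 0
  have "0 \<le> IW d (legendre d 0)"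
    by (rule IW_nonneg[OF d]) (auto intro: leg_cont')
  moreover have "IW d (legendre d (Suc 0)) = 0"
  proof -
    have "IW d (legendre d (Suc 0)) = IW d (\<lambda>s. s * legendre d 0 s)"
      by (rule IW_cong) simp
    then have "(real 0 + real d - 1) * IW d (legendre d (Suc 0)) = 0"
      using IW_D[OF d, of 0] by simp
    then show ?thesis using d by simp
  qed
  ultimately show ?case by (simp del: legendre.simps)
next
  case (Suc n)
  let ?I = "\<lambda>k. IW d (legendre d k)"
  let ?J = "\<lambda>k. IW d (\<lambda>s. s * legendre d k s)"
  have In: "0 \<le> ?I n" using Suc by simp
  have e1: "(real n + real d - 1) * ?I (Suc (Suc n)) = (2 * real n + real d) * ?J (Suc n) - (real n + 1) * ?I n"
  proof -
    have "(real n + real d - 1) * ?I (Suc (Suc n)) = IW d (\<lambda>s. (real n + real d - 1) * legendre d (Suc (Suc n)) s)"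
      by (simp add: IW_cmul del: legendre.simps)
    also have "\<dots> = IW d (\<lambda>s. (2 * real n + real d) * (s * legendre d (Suc n) s) - (real n + 1) * legendre d n s)"
      by (rule IW_cong) (simp only: leg_rec[OF d] mult.assoc)
    also have "\<dots> = (2 * real n + real d) * ?J (Suc n) - (real n + 1) * ?I n"
      by (rule IW_lin') (use d in \<open>auto intro!: continuous_intros leg_cont''\<close>)
    finally show ?thesis .
  qed
  have e2: "(real n + 1) * ?I n = (real n + real d) * ?J (Suc n)"
    using IW_D[OF d, of "Suc n"] by (simp add: add.commute add.left_commute)
  have pos: "real n + real d > 0" "real n + real d - 1 > 0" using d by auto
  have "?J (Suc n) = (real n + 1) * ?I n / (real n + real d)"
    using e2 pos by (simp add: field_simps)
  then have "(real n + real d - 1) * ?I (Suc (Suc n)) = (2 * real n + real d) * ((real n + 1) * ?I n / (real n + real d)) - (real n + 1) * ?I n"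
    using e1 by (simp del: legendre.simps)
  also have "\<dots> = (real n + 1) * ?I n * real n / (real n + real d)"
    by (rule alg1) (use pos in auto)
  also have "\<dots> \<ge> 0" using In pos by simp
  finally have "0 \<le> ?I (Suc (Suc n))"
    using pos by (simp add: zero_le_mult_iff)
  then show ?case using Suc by (simp del: legendre.simps)
qed

lemma mono_nonneg:
  assumes d: "d \<ge> 2"
  shows "0 \<le> IW d (\<lambda>s. s ^ k * legendre d i s)"
proof (induction k arbitrary: i)
  case 0
  then show ?case using I_nonneg_pair[OF d, of i] by (simp add: IW_def)
next
  case (Suc k)
  show ?case
  proof (cases i)
    case 0
    have "IW d (\<lambda>s. s ^ Suc k * legendre d i s) = IW d (\<lambda>s. s ^ k * legendre d (Suc 0) s)"
      using 0 by (intro IW_cong) simp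
    then show ?thesis using Suc.IH[of "Suc 0"] by simp
  next
    case (Suc n)
    have pos: "2 * real n + real d > 0" using d by auto
    have "IW d (\<lambda>s. s ^ Suc k * legendre d i s) =
       IW d (\<lambda>s. ((real n + real d - 1) / (2 * real n + real d)) * (s ^ k * legendre d (Suc (Suc n)) s)
         + ((real n + 1) / (2 * real n + real d)) * (s ^ k * legendre d n s))"
    proof (rule IW_cong)
      fix s :: real
      have "(2 * real n + real d) * (s * legendre d (Suc n) s) =
          (real n + real d - 1) * legendre d (Suc (Suc n)) s + (real n + 1) * legendre d n s"
        using leg_rec[OF d, of n s] by (simp add: algebra_simps del: legendre.simps)
      then have "s * legendre d (Suc n) s = ((real n + real d - 1) * legendre d (Suc (Suc n)) s + (real n + 1) * legendre d n s)
           / (2 * real n + real d)"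
        using pos by (simp add: field_simps del: legendre.simps)
      then have eq: "s * legendre d (Suc n) s = ((real n + real d - 1) * legendre d (Suc (Suc n)) s + (real n + 1) * legendre d n s)
           / (2 * real n + real d)" .
      have "s ^ Suc k * legendre d i s = s ^ k * (s * legendre d (Suc n) s)" using Suc by simp
      also have "\<dots> = s ^ k * (((real n + real d - 1) * legendre d (Suc (Suc n)) s + (real n + 1) * legendre d n s)
           / (2 * real n + real d))" by (simp only: eq)
      also have "\<dots> = ((real n + real d - 1) / (2 * real n + real d)) * (s ^ k * legendre d (Suc (Suc n)) s)
         + ((real n + 1) / (2 * real n + real d)) * (s ^ k * legendre d n s)"
        by (rule alg2)
      finally show "s ^ Suc k * legendre d i s = ((real n + real d - 1) / (2 * real n + real d)) * (s ^ k * legendre d (Suc (Suc n)) s)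
         + ((real n + 1) / (2 * real n + real d)) * (s ^ k * legendre d n s)" .
    qed
    also have "\<dots> = ((real n + real d - 1) / (2 * real n + real d)) * IW d (\<lambda>s. s ^ k * legendre d (Suc (Suc n)) s)
         + ((real n + 1) / (2 * real n + real d)) * IW d (\<lambda>s. s ^ k * legendre d n s)"
      by (rule IW_lin) (use d in \<open>auto intro!: continuous_intros leg_cont''\<close>)
    also have "\<dots> \<ge> 0"
      using Suc.IH[of "Suc (Suc n)"] Suc.IH[of n] pos d by (intro add_nonneg_nonneg mult_nonneg_nonneg) auto
    finally show ?thesis .
  qed
qed

fun bc :: "real \<Rightarrow> nat \<Rightarrow> real" where
  "bc t 0 = 1"
| "bc t (Suc 0) = t"
| "bc t (Suc (Suc k)) = ((real k)\<^sup>2 + t\<^sup>2) / ((real k + 1) * (real k + 2)) * bc t k"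

lemma bc_nonneg: "t \<ge> 0 \<Longrightarrow> 0 \<le> bc t k"
  by (induction t k rule: bc.induct) auto

lemma bc_bounded:
  assumes t: "t \<ge> 0"
  shows "\<exists>M. \<forall>k. bc t k \<le> M"
proof -
  define K where "K = nat \<lceil>t\<^sup>2\<rceil>"
  define M where "M = Max (bc t ` {..Suc K})"
  have "bc t k \<le> M" for k
  proof (induction k rule: less_induct)
    case (less k)
    show ?case
    proof (cases "k \<le> Suc K")
      case True
      then show ?thesis unfolding M_def by (intro Max_ge) auto
    next
      case False
      then obtain j where j: "k = Suc (Suc j)" "K \<le> j"
        by (metis Suc_le_D not_less_eq_eq)
      have "t\<^sup>2 \<le> real K" unfolding K_def by linarith
      then have "t\<^sup>2 \<le> real j" using j by linarith
      have pos: "(real j + 1) * (real j + 2) > 0" by simp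
      have "(real j)\<^sup>2 + t\<^sup>2 \<le> (real j + 1) * (real j + 2)"
        using \<open>t\<^sup>2 \<le> real j\<close> by (simp add: power2_eq_square algebra_simps)
      then have f: "((real j)\<^sup>2 + t\<^sup>2) / ((real j + 1) * (real j + 2)) \<le> 1"
        using pos by (simp add: divide_le_eq_1_pos)
      have "bc t k = ((real j)\<^sup>2 + t\<^sup>2) / ((real j + 1) * (real j + 2)) * bc t j" using j by simp
      also have "\<dots> \<le> 1 * bc t j"
        by (rule mult_right_mono[OF f bc_nonneg[OF t]])
      also have "\<dots> \<le> M" using less[of j] j by simp
      finally show ?thesis .
    qed
  qed
  then show ?thesis by blast
qed

declare bc.simps(3)[simp del]

lemma bc_summable:
  assumes t: "t \<ge> 0" and x: "norm x < 1"
  shows "summable (\<lambda>n. bc t n * x ^ n)"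
proof -
  obtain M where M: "\<And>k. bc t k \<le> M" using bc_bounded[OF t] by blast
  show ?thesis
  proof (rule summable_comparison_test)
    show "\<exists>N. \<forall>n\<ge>N. norm (bc t n * x ^ n) \<le> M * norm x ^ n"
    proof (intro exI allI impI)
      fix n :: nat
      have "norm (bc t n * x ^ n) = bc t n * norm x ^ n"
        using bc_nonneg[OF t, of n] by (simp add: abs_mult power_abs)
      also have "\<dots> \<le> M * norm x ^ n" by (intro mult_right_mono M) simp
      finally show "norm (bc t n * x ^ n) \<le> M * norm x ^ n" .
    qed
    show "summable (\<lambda>n. M * norm x ^ n)"
      using x by (intro summable_mult summable_geometric) auto
  qed
qed

definition G0 :: "real \<Rightarrow> real \<Rightarrow> real" where "G0 t x = (\<Sum>n. bc t n * x ^ n)"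
definition G1 :: "real \<Rightarrow> real \<Rightarrow> real" where "G1 t x = (\<Sum>n. diffs (bc t) n * x ^ n)"
definition G2 :: "real \<Rightarrow> real \<Rightarrow> real" where "G2 t x = (\<Sum>n. diffs (diffs (bc t)) n * x ^ n)"

lemma summ1:
  assumes t: "t \<ge> 0" and x: "norm x < 1"
  shows "summable (\<lambda>n. diffs (bc t) n * x ^ n)"
  by (rule termdiff_converges[OF x]) (use bc_summable[OF t] in auto)

lemma summ2:
  assumes t: "t \<ge> 0" and x: "norm x < 1"
  shows "summable (\<lambda>n. diffs (diffs (bc t)) n * x ^ n)"
  by (rule termdiff_converges[OF x]) (use summ1[OF t] in auto)

lemma G0_deriv:
  assumes t: "t \<ge> 0" and x: "\<bar>x\<bar> < 1"
  shows "(G0 t has_real_derivative G1 t x) (at x)"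
  unfolding G0_def[abs_def] G1_def
  by (rule termdiffs_strong'[of 1]) (use bc_summable[OF t] x in auto)

lemma G1_deriv:
  assumes t: "t \<ge> 0" and x: "\<bar>x\<bar> < 1"
  shows "(G1 t has_real_derivative G2 t x) (at x)"
  unfolding G1_def[abs_def] G2_def
  by (rule termdiffs_strong'[of 1]) (use summ1[OF t] x in auto)

lemma diffs2: "diffs (diffs (bc t)) n = ((real n)\<^sup>2 + t\<^sup>2) * bc t n"
proof -
  have p: "(real n + 1) * (real n + 2) \<noteq> 0" by simp
  have "diffs (diffs (bc t)) n = ((real n + 1) * (real n + 2)) * bc t (Suc (Suc n))"
    by (simp add: diffs_def algebra_simps)
  also have "\<dots> = ((real n + 1) * (real n + 2)) * (((real n)\<^sup>2 + t\<^sup>2) / ((real n + 1) * (real n + 2)) * bc t n)"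
    by (simp only: bc.simps(3))
  also have "\<dots> = ((real n)\<^sup>2 + t\<^sup>2) * bc t n"
    using p by simp
  finally show ?thesis .
qed

lemma G_ode:
  assumes t: "t \<ge> 0" and x: "\<bar>x\<bar> < 1"
  shows "(1 - x\<^sup>2) * G2 t x - x * G1 t x - t\<^sup>2 * G0 t x = 0"
proof -
  have x': "norm x < 1" using x by simp
  have s0: "(\<lambda>n. bc t n * x ^ n) sums G0 t x"
    unfolding G0_def using bc_summable[OF t x'] by (rule summable_sums)
  have s1: "(\<lambda>n. diffs (bc t) n * x ^ n) sums G1 t x"
    unfolding G1_def using summ1[OF t x'] by (rule summable_sums)
  have s2: "(\<lambda>n. diffs (diffs (bc t)) n * x ^ n) sums G2 t x"
    unfolding G2_def using summ2[OF t x'] by (rule summable_sums)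
  have s2': "(\<lambda>n. real n * (real n - 1) * bc t n * x ^ n) sums (x\<^sup>2 * G2 t x)"
  proof -
    have "(\<lambda>n. x\<^sup>2 * (diffs (diffs (bc t)) n * x ^ n)) sums (x\<^sup>2 * G2 t x)"
      by (rule sums_mult[OF s2])
    moreover have "x\<^sup>2 * (diffs (diffs (bc t)) n * x ^ n) =
        real (n + 2) * (real (n + 2) - 1) * bc t (n + 2) * x ^ (n + 2)" for n
      by (simp add: diffs_def power2_eq_square algebra_simps)
    ultimately have "(\<lambda>n. (\<lambda>m. real m * (real m - 1) * bc t m * x ^ m) (n + 2)) sums (x\<^sup>2 * G2 t x)"
      by simp
    then show ?thesis
      by (subst (asm) sums_zero_iff_shift) (auto simp: less_2_cases_iff)
  qed
  have s1': "(\<lambda>n. real n * bc t n * x ^ n) sums (x * G1 t x)"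
  proof -
    have "(\<lambda>n. x * (diffs (bc t) n * x ^ n)) sums (x * G1 t x)"
      by (rule sums_mult[OF s1])
    moreover have "x * (diffs (bc t) n * x ^ n) = real (n + 1) * bc t (n + 1) * x ^ (n + 1)" for n
      by (simp add: diffs_def algebra_simps)
    ultimately have "(\<lambda>n. (\<lambda>m. real m * bc t m * x ^ m) (n + 1)) sums (x * G1 t x)"
      by simp
    then show ?thesis
      by (subst (asm) sums_zero_iff_shift) auto
  qed
  have "(\<lambda>n. diffs (diffs (bc t)) n * x ^ n - real n * (real n - 1) * bc t n * x ^ n
      - real n * bc t n * x ^ n - t\<^sup>2 * (bc t n * x ^ n)) sums
      (G2 t x - x\<^sup>2 * G2 t x - x * G1 t x - t\<^sup>2 * G0 t x)"
    by (intro sums_diff s2 s2' s1' sums_mult s0)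
  moreover have "diffs (diffs (bc t)) n * x ^ n - real n * (real n - 1) * bc t n * x ^ n
      - real n * bc t n * x ^ n - t\<^sup>2 * (bc t n * x ^ n) = 0" for n
    unfolding diffs2 by (simp add: algebra_simps power2_eq_square)
  ultimately have "(\<lambda>n. 0::real) sums (G2 t x - x\<^sup>2 * G2 t x - x * G1 t x - t\<^sup>2 * G0 t x)"
    by simp
  then have "G2 t x - x\<^sup>2 * G2 t x - x * G1 t x - t\<^sup>2 * G0 t x = 0"
    using sums_unique2 sums_zero by blast
  then show ?thesis by (simp add: algebra_simps)
qed

lemma sin_lt1:
  assumes "-(pi/2) < p" "p < pi/2"
  shows "\<bar>sin p\<bar> < 1"
proof -
  have "0 < cos p" using cos_gt_zero_pi[OF assms] .
  then have "(sin p)\<^sup>2 < 1" using sin_cos_squared_add[of p] by (smt (verit) zero_less_power)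
  then show ?thesis by (simp add: abs_square_less_1)
qed

lemma G_exp:
  assumes t: "t \<ge> 0" and x: "\<bar>x\<bar> < 1"
  shows "G0 t x = exp (t * arcsin x)"
proof -
  define H where "H p = G0 t (sin p)" for p
  define H1 where "H1 p = G1 t (sin p) * cos p" for p
  let ?S = "{-(pi/2)<..<pi/2}"
  have sl: "\<bar>sin p\<bar> < 1" if "p \<in> ?S" for p using sin_lt1 that by auto
  have dH: "(H has_real_derivative H1 p) (at p)" if "p \<in> ?S" for p
    unfolding H_def[abs_def] H1_def
    by (rule DERIV_chain2[OF G0_deriv[OF t sl[OF that]] DERIV_sin])
  have dH1: "(H1 has_real_derivative t\<^sup>2 * H p) (at p)" if "p \<in> ?S" for p
  proof -
    have "(H1 has_real_derivative G2 t (sin p) * cos p * cos p + G1 t (sin p) * (- sin p)) (at p)"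
      unfolding H1_def[abs_def]
      by (rule DERIV_mult'[THEN DERIV_cong], rule DERIV_chain2[OF G1_deriv[OF t sl[OF that]] DERIV_sin],
          rule DERIV_cos) (simp add: algebra_simps)
    moreover have "G2 t (sin p) * cos p * cos p + G1 t (sin p) * (- sin p) = t\<^sup>2 * H p"
    proof -
      have "cos p * cos p = 1 - (sin p)\<^sup>2" using sin_cos_squared_add[of p] by (simp add: power2_eq_square)
      then have cc: "G2 t (sin p) * cos p * cos p = G2 t (sin p) * (1 - (sin p)\<^sup>2)"
        by (simp add: mult.assoc)
      have "G2 t (sin p) * cos p * cos p + G1 t (sin p) * (- sin p) =
          G2 t (sin p) * (1 - (sin p)\<^sup>2) + G1 t (sin p) * (- sin p)" by (simp only: cc)
      also have "\<dots> = (1 - (sin p)\<^sup>2) * G2 t (sin p) - sin p * G1 t (sin p)" by (simp add: algebra_simps)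
      also have "\<dots> = t\<^sup>2 * G0 t (sin p)" using G_ode[OF t sl[OF that]] by simp
      finally show ?thesis unfolding H_def .
    qed
    ultimately show ?thesis by simp
  qed
  have H0: "H 0 = 1" unfolding H_def G0_def by simp
  have H10: "H1 0 = t" unfolding H1_def G1_def by (simp add: diffs_def)
  have v: "H1 p = t * H p" if "p \<in> ?S" for p
  proof -
    define v where "v p = (H1 p - t * H p) * exp (t * p)" for p
    have "(v has_real_derivative 0) (at q)" if "q \<in> ?S" for q
    proof -
      have "(v has_real_derivative (H1 q - t * H q) * (exp (t * q) * t) + (t\<^sup>2 * H q - t * H1 q) * exp (t * q)) (at q)"
        unfolding v_def[abs_def]
        by (intro DERIV_mult' DERIV_diff DERIV_cmult dH dH1 that) (auto intro!: derivative_eq_intros)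
      then show ?thesis by (simp add: algebra_simps power2_eq_square)
    qed
    then have "v p = v 0" using that by (intro DERIV_isconst3[of "-(pi/2)" "pi/2"]) auto
    then have "(H1 p - t * H p) * exp (t * p) = 0" unfolding v_def using H0 H10 by simp
    then show ?thesis by simp
  qed
  have z: "H p = exp (t * p)" if "p \<in> ?S" for p
  proof -
    define z where "z p = H p * exp (- t * p)" for p
    have "(z has_real_derivative 0) (at q)" if "q \<in> ?S" for q
    proof -
      have "(z has_real_derivative H q * (exp (- t * q) * (- t)) + H1 q * exp (- t * q)) (at q)"
        unfolding z_def[abs_def]
        by (intro DERIV_mult' dH that) (auto intro!: derivative_eq_intros)
      then show ?thesis using v[OF that] by (simp add: algebra_simps)
    qed
    then have "z p = z 0" using that by (intro DERIV_isconst3[of "-(pi/2)" "pi/2"]) auto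
    then have "H p * exp (- t * p) = 1" unfolding z_def using H0 by simp
    then show ?thesis by (simp add: exp_minus field_simps)
  qed
  have "arcsin x \<in> ?S" using arcsin_lt_bounded[of x] x by auto
  from z[OF this] show ?thesis using x unfolding H_def by simp
qed

lemma IW_sum:
  fixes k :: nat
  assumes d: "d \<ge> 2" and g: "\<And>n. continuous_on {-1..1} (g n)"
  shows "IW d (\<lambda>s. \<Sum>n<k. a n * g n s) = (\<Sum>n<k. a n * IW d (g n))"
proof (induction k)
  case 0
  then show ?case by (simp add: IW_def)
next
  case (Suc k)
  have "IW d (\<lambda>s. \<Sum>n<Suc k. a n * g n s) = IW d (\<lambda>s. 1 * (\<Sum>n<k. a n * g n s) + a k * g k s)"
    by simp
  also have "\<dots> = 1 * IW d (\<lambda>s. \<Sum>n<k. a n * g n s) + a k * IW d (g k)"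
    by (rule IW_lin[OF d]) (use g in \<open>auto intro!: continuous_intros\<close>)
  finally show ?case using Suc by simp
qed

lemma partial_bound:
  assumes t: "t \<ge> 0" and s: "\<bar>s\<bar> < 1"
  shows "\<bar>\<Sum>n<k. bc t n * s ^ n\<bar> \<le> exp (t * pi / 2)"
proof -
  have "\<bar>\<Sum>n<k. bc t n * s ^ n\<bar> \<le> (\<Sum>n<k. \<bar>bc t n * s ^ n\<bar>)" by (rule sum_abs)
  also have "\<dots> = (\<Sum>n<k. bc t n * \<bar>s\<bar> ^ n)"
    using bc_nonneg[OF t] by (simp add: abs_mult power_abs)
  also have "\<dots> \<le> (\<Sum>n. bc t n * \<bar>s\<bar> ^ n)"
    by (rule sum_le_suminf) (use bc_summable[OF t, of "\<bar>s\<bar>"] s bc_nonneg[OF t] in auto)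
  also have "\<dots> = exp (t * arcsin \<bar>s\<bar>)" using G_exp[OF t, of "\<bar>s\<bar>"] s by (simp add: G0_def)
  also have "\<dots> \<le> exp (t * pi / 2)"
  proof -
    have "arcsin \<bar>s\<bar> \<le> pi / 2" using arcsin_ubound[of "\<bar>s\<bar>"] s by auto
    then have "t * arcsin \<bar>s\<bar> \<le> t * (pi / 2)" using t by (rule mult_left_mono)
    then show ?thesis by simp
  qed
  finally show ?thesis .
qed

theorem proposition2:
  fixes d :: nat and t :: real
  assumes "d \<ge> 2" and "t > 0"
  shows "\<forall>i. legendre_coeff d (\<lambda>s. exp (- t * arccos s)) i \<ge> 0"
proof
  fix i
  have d: "d \<ge> 2" using assms by simp
  have t: "t \<ge> 0" using assms by simp
  let ?P = "legendre d i"
  let ?f = "\<lambda>s. exp (- t * arccos s)"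
  define c0 where "c0 = exp (- (t * pi / 2))"
  have c0: "c0 > 0" "c0 * exp (t * pi / 2) = 1" unfolding c0_def by (simp_all add: exp_minus field_simps)
  define gk where "gk k s = c0 * ((\<Sum>n<k. bc t n * s ^ n) * ?P s)" for k s
  let ?S = "{-1<..<(1::real)}"
  have gk_cont: "continuous_on {-1..1} (gk k)" for k
    unfolding gk_def by (auto intro!: continuous_intros leg_cont'')
  have gk_nonneg: "0 \<le> IW d (gk k)" for k
  proof -
    have "IW d (gk k) = IW d (\<lambda>s. \<Sum>n<k. (c0 * bc t n) * (s ^ n * ?P s))"
      unfolding gk_def by (rule IW_cong) (simp add: sum_distrib_left sum_distrib_right mult_ac)
    also have "\<dots> = (\<Sum>n<k. (c0 * bc t n) * IW d (\<lambda>s. s ^ n * ?P s))"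
      by (rule IW_sum[OF d]) (auto intro!: continuous_intros leg_cont'')
    also have "\<dots> \<ge> 0"
      using c0 bc_nonneg[OF t] mono_nonneg[OF d] by (intro sum_nonneg mult_nonneg_nonneg) auto
    finally show ?thesis .
  qed
  have fP_cont: "continuous_on {-1..1} (\<lambda>s. ?f s * ?P s)"
    by (auto intro!: continuous_intros leg_cont'' continuous_on_arccos')
  have DC: "(\<lambda>k. integral ?S (\<lambda>s. gk k s * legendre_weight d s)) \<longlonglongrightarrow>
      integral ?S (\<lambda>s. ?f s * ?P s * legendre_weight d s)"
  proof (rule dominated_convergence(2))
    show "(\<lambda>s. gk k s * legendre_weight d s) integrable_on ?S" for k
      using cont_w_int[OF d gk_cont] integrable_on_open_interval_real by blast
    show "(\<lambda>s. \<bar>?P s\<bar> * legendre_weight d s) integrable_on ?S"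
      using cont_w_int[OF d, of "\<lambda>s. \<bar>?P s\<bar>"] integrable_on_open_interval_real
      by (auto intro!: continuous_intros leg_cont'')
    fix k and s :: real assume s: "s \<in> ?S"
    then have s': "\<bar>s\<bar> < 1" by auto
    have "\<bar>c0 * (\<Sum>n<k. bc t n * s ^ n)\<bar> = c0 * \<bar>\<Sum>n<k. bc t n * s ^ n\<bar>"
      using c0 by (simp add: abs_mult)
    also have "\<dots> \<le> c0 * exp (t * pi / 2)"
      using partial_bound[OF t s', of k] c0 by (intro mult_left_mono) auto
    finally have "\<bar>c0 * (\<Sum>n<k. bc t n * s ^ n)\<bar> \<le> c0 * exp (t * pi / 2)" .
    then have "\<bar>c0 * (\<Sum>n<k. bc t n * s ^ n)\<bar> \<le> 1" using c0 by simp
    then have "\<bar>c0 * (\<Sum>n<k. bc t n * s ^ n)\<bar> * (\<bar>?P s\<bar> * legendre_weight d s) \<le> 1 * (\<bar>?P s\<bar> * legendre_weight d s)"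
      using w_nonneg by (intro mult_right_mono) auto
    then show "norm (gk k s * legendre_weight d s) \<le> \<bar>?P s\<bar> * legendre_weight d s"
      unfolding gk_def using w_nonneg[of d s] by (simp add: abs_mult mult_ac)
    have "(\<lambda>k. \<Sum>n<k. bc t n * s ^ n) \<longlonglongrightarrow> G0 t s"
      unfolding G0_def by (rule summable_LIMSEQ[OF bc_summable[OF t]]) (use s' in auto)
    then have "(\<lambda>k. gk k s * legendre_weight d s) \<longlonglongrightarrow> c0 * (G0 t s * ?P s) * legendre_weight d s"
      unfolding gk_def by (intro tendsto_intros)
    moreover have "c0 * (G0 t s * ?P s) * legendre_weight d s = ?f s * ?P s * legendre_weight d s"
    proof -
      have ac: "arccos s = pi / 2 - arcsin s" using s' arccos_arcsin_eq[of s] by auto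
      have "c0 * G0 t s = ?f s"
        using G_exp[OF t s'] unfolding c0_def ac
        by (simp add: exp_add[symmetric] algebra_simps)
      then show ?thesis by (simp add: mult_ac)
    qed
    ultimately show "(\<lambda>k. gk k s * legendre_weight d s) \<longlonglongrightarrow> ?f s * ?P s * legendre_weight d s"
      by simp
  qed
  have num: "0 \<le> integral {-1..1} (\<lambda>s. ?f s * ?P s * legendre_weight d s)"
  proof (rule LIMSEQ_le_const)
    show "(\<lambda>k. IW d (gk k)) \<longlonglongrightarrow> integral {-1..1} (\<lambda>s. ?f s * ?P s * legendre_weight d s)"
      using DC unfolding IW_def integral_open_interval_real .
    show "\<exists>N. \<forall>n\<ge>N. 0 \<le> IW d (gk n)" using gk_nonneg by blast
  qed
  have den: "0 \<le> integral {-1..1} (\<lambda>s. (?P s)\<^sup>2 * legendre_weight d s)"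
    using IW_nonneg[OF d, of "\<lambda>s. (?P s)\<^sup>2"] unfolding IW_def
    by (auto intro!: continuous_intros leg_cont'')
  show "0 \<le> legendre_coeff d ?f i"
    unfolding legendre_coeff_def using num den by (rule divide_nonneg_nonneg)
qed

end
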